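(* Let $h>0$, $N,s\in\mathbb{N}$ with $s\ge1$, $\mu>0$, $\alpha,\beta\in[0,1/2]$, and let $L:\mathbb{R}^d\times\mathbb{R}^d\to\mathbb{R}$ be $C^1$. Fix control points $0=d_0<d_1<\dots<d_s=1$, Lagrange polynomials $\ell_\nu$ of degree $s$ with $\ell_\nu(d_i)=\delta_{\nu i}$, and a quadrature rule $(b_i,c_i)_{i=1}^r$ with $c_i\in[0,1]$. For $(q^0,\dots,q^s)\in(\mathbb{R}^d)^{s+1}$ define the polynomial $q(\tau)=\sum_{\nu=0}^s q^\nu\ell_\nu(\tau)$ and the discrete Lagrangian $$L_d(q^0,\dots,q^s)=h\sum_{i=1}^r b_i\,L\Big(\sum_{\nu=0}^s q^\nu\ell_\nu(c_i),\ \tfrac1h\sum_{\nu=0}^s q^\nu\dot\ell_\nu(c_i)\Big).$$ Consider unknowns $x_k^\nu,y_k^\nu\in\mathbb{R}^d$, $k=0,\dots,N-1$, $\nu=0,\dots,s$, subject to $x_k^s=x_{k+1}^0$, $y_k^s=y_{k+1}^0$ ($k=0,\dots,N-2$), and write $x_k:=x_k^0$, $y_k:=y_k^0$ for $k\le N-1$, $x_N:=x_{N-1}^s$, $y_N:=y_{N-1}^s$. Let $\gamma=\rho/\sigma$ with $\rho_0/\sigma_0>0$ (e.g. the BDF function $\gamma_p(z)=\sum_{j=1}^p\frac1j(1-z)^j$), let $\omega_n^{(a)}$ be the Taylor coefficients of $(\gamma(z)/h)^{-a}$, and set $\mathcal{J}_{-}^{a}x_k=\sum_{n=0}^{k}\omega_n^{(a)}x_{k-n}$,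 $\mathcal{J}_{+}^{a}y_k=\sum_{n=0}^{N-k}\omega_n^{(a)}y_{k+n}$. Define the action $$\mathcal{S}_d=\sum_{k=0}^{N-1}\big(L_d(x_k^0,\dots,x_k^s)+L_d(y_k^0,\dots,y_k^s)\big)-\mu h\sum_{k=0}^{N}\mathcal{J}^{-\alpha}_{-}x_k\cdot\mathcal{J}^{-\beta}_{+}y_k .$$ Suppose the following hold, with $D_i$ the gradient of $L_d$ with respect to its $i$-th argument: (i) $D_{s+1}L_d(x_{k-1}^0,\dots,x_{k-1}^s)+D_1L_d(x_k^0,\dots,x_k^s)-\mu h\,\mathcal{J}^{-(\alpha+\beta)}_{-}x_k^0=0$ for $k=1,\dots,N-1$; (ii) $D_iL_d(x_k^0,\dots,x_k^s)=0$ for $k=0,\dots,N-1$, $i=2,\dots,s$; (iii) $D_{s+1}L_d(y_{k-1}^0,\dots,y_{k-1}^s)+D_1L_d(y_k^0,\dots,y_k^s)-\mu h\,\mathcal{J}^{-(\alpha+\beta)}_{+}y_k^0=0$ for $k=1,\dots,N-1$; (iv) $D_iL_d(y_k^0,\dots,y_k^s)=0$ for $k=0,\dots,N-1$, $i=2,\dots,s$. Then for every family of variations $\delta x_k^\nu\in\mathbb{R}^d$ compatible with the transition condition ($\delta x_k^s=\delta x_{k+1}^0$) and with $\delta x_0^0=0$, $\delta x_{N-1}^s=0$, the derivative at $\epsilon=0$ of $\epsilon\mapsto\mathcal{S}_d$ evaluated at $(x_k^\nu+\epsilon\delta x_k^\nu,\ y_k^\nu+\epsilon\delta x_k^\nu)$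 vanishes; i.e. (i)–(iv) are sufficient conditions for extremals of $\mathcal{S}_d$ under restricted variations.
   Context: This is the higher-order (Galerkin) fractional variational integrator: the conservative part uses polynomial interpolation of degree $s$ on each interval $[kh,(k+1)h]$ with a quadrature rule, while the fractional part uses convolution quadrature on the main nodes only. Restricted variations: the same variation is applied to the doubled variables $x$ and $y$. The continuous model being discretized is $\frac{d}{dt}\partial_{\dot x}L-\partial_xL=-\mu D_-^{\alpha+\beta}x$. *)

theory Defs
  imports "HOL-Analysis.Analysis" "HOL-Computational_Algebra.Polynomial"
begin

definition lagr :: "(nat \<Rightarrow> real) \<Rightarrow> nat \<Rightarrow> nat \<Rightarrow> real \<Rightarrow> real" where
  "lagr dp s nu t = (\<Prod>j\<in>{0..s} - {nu}. (t - dp j) / (dp nu - dp j))"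

definition Ld :: "((real^'d) \<times> (real^'d) \<Rightarrow> real) \<Rightarrow> real \<Rightarrow> (nat \<Rightarrow> real) \<Rightarrow> nat
    \<Rightarrow> nat \<Rightarrow> (nat \<Rightarrow> real) \<Rightarrow> (nat \<Rightarrow> real) \<Rightarrow> (nat \<Rightarrow> real^'d) \<Rightarrow> real" where
  "Ld L h dp s r b c q = h * (\<Sum>i=1..r. b i *
     L (\<Sum>nu=0..s. lagr dp s nu (c i) *\<^sub>R q nu,
        (1 / h) *\<^sub>R (\<Sum>nu=0..s. deriv (lagr dp s nu) (c i) *\<^sub>R q nu)))"

text \<open>Gradient of a function of (q 0, ..., q s) with respect to its argument number i
  (0-based: argument i is q i).\<close>
definition gradarg :: "((nat \<Rightarrow> real^'d) \<Rightarrow> real) \<Rightarrow> nat \<Rightarrow> (nat \<Rightarrow> real^'d) \<Rightarrow> real^'d" where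
  "gradarg F i q = (THE v. ((\<lambda>z. F (q(i := z))) has_derivative (\<lambda>w. v \<bullet> w)) (at (q i)))"

definition omega :: "real poly \<Rightarrow> real poly \<Rightarrow> real \<Rightarrow> real \<Rightarrow> nat \<Rightarrow> real" where
  "omega \<rho> \<sigma> h a n =
     (deriv ^^ n) (\<lambda>z. ((poly \<rho> z / poly \<sigma> z) / h) powr (- a)) 0 / fact n"

definition node :: "nat \<Rightarrow> nat \<Rightarrow> (nat \<Rightarrow> nat \<Rightarrow> real^'d) \<Rightarrow> nat \<Rightarrow> real^'d" where
  "node N s X k = (if k < N then X k 0 else X (N - 1) s)"

definition Jminus :: "(nat \<Rightarrow> real) \<Rightarrow> (nat \<Rightarrow> real^'d) \<Rightarrow> nat \<Rightarrow> real^'d" where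
  "Jminus w x k = (\<Sum>n=0..k. w n *\<^sub>R x (k - n))"

definition Jplus :: "nat \<Rightarrow> (nat \<Rightarrow> real) \<Rightarrow> (nat \<Rightarrow> real^'d) \<Rightarrow> nat \<Rightarrow> real^'d" where
  "Jplus N w y k = (\<Sum>n=0..N - k. w n *\<^sub>R y (k + n))"

definition action where
  "action L h dp s r b c \<rho> \<sigma> \<mu> \<alpha> \<beta> N X Y =
     (\<Sum>k=0..<N. Ld L h dp s r b c (X k) + Ld L h dp s r b c (Y k))
     - \<mu> * h * (\<Sum>k=0..N. Jminus (omega \<rho> \<sigma> h (-\<alpha>)) (node N s X) k
                          \<bullet> Jplus N (omega \<rho> \<sigma> h (-\<beta>)) (node N s Y) k)"

end

theory Submission
  imports Defs
begin


definition Dn :: "real set \<Rightarrow> nat \<Rightarrow> (real \<Rightarrow> real) \<Rightarrow> bool" where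
  "Dn S n f \<longleftrightarrow> (\<forall>i\<le>n. \<forall>x\<in>S. (deriv ^^ i) f field_differentiable (at x))"

lemma hd_cong:
  assumes "open S" "\<And>x. x \<in> S \<Longrightarrow> f x = g x" "x \<in> S"
  shows "(deriv ^^ i) f x = (deriv ^^ i) g x"
proof (rule higher_deriv_cong_ev)
  show "\<forall>\<^sub>F x in nhds x. f x = g x"
    using eventually_nhds_in_open[OF assms(1,3)] by (rule eventually_mono) (use assms in auto)
qed auto

lemma Dn_cong:
  assumes "open S" "\<And>x. x \<in> S \<Longrightarrow> f x = g x" "Dn S n f"
  shows "Dn S n g"
  unfolding Dn_def
proof (intro allI impI ballI)
  fix i x assume i: "i \<le> n" and x: "x \<in> S"
  from assms(3) i x obtain D where D: "((deriv ^^ i) f has_field_derivative D) (at x)"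
    unfolding Dn_def field_differentiable_def by blast
  have "((deriv ^^ i) g has_field_derivative D) (at x)"
    by (rule has_field_derivative_transform_within_open[OF D assms(1) x])
       (rule hd_cong[OF assms(1,2)], auto)
  then show "(deriv ^^ i) g field_differentiable at x"
    unfolding field_differentiable_def by blast
qed

lemma Dn_Suc: "Dn S (Suc n) f \<longleftrightarrow> (\<forall>x\<in>S. f field_differentiable at x) \<and> Dn S n (deriv f)"
  unfolding Dn_def
proof safe
  fix i x assume "\<forall>i\<le>Suc n. \<forall>x\<in>S. (deriv ^^ i) f field_differentiable at x" "i \<le> n" "x \<in> S"
  then show "(deriv ^^ i) (deriv f) field_differentiable at x"
    by (metis Suc_le_mono funpow_Suc_right o_apply)
next
  fix x assume "\<forall>i\<le>Suc n. \<forall>x\<in>S. (deriv ^^ i) f field_differentiable at x" "x \<in> S"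
  then show "f field_differentiable at x" by (metis funpow_0 le0)
next
  fix i x assume "\<forall>x\<in>S. f field_differentiable at x"
    "\<forall>i\<le>n. \<forall>x\<in>S. (deriv ^^ i) (deriv f) field_differentiable at x" "i \<le> Suc n" "x \<in> S"
  then show "(deriv ^^ i) f field_differentiable at x"
    by (cases i) (auto simp del: funpow.simps simp: funpow_Suc_right)
qed

lemma Dn_mono: "Dn S n f \<Longrightarrow> m \<le> n \<Longrightarrow> Dn S m f"
  unfolding Dn_def by auto

lemma Dn_add:
  assumes "open S" shows "Dn S n f \<Longrightarrow> Dn S n g \<Longrightarrow> Dn S n (\<lambda>x. f x + g x)"
proof (induction n arbitrary: f g)
  case 0 then show ?case unfolding Dn_def by (auto intro: field_differentiable_add)
next
  case (Suc n)
  have d: "\<forall>x\<in>S. f field_differentiable at x" "\<forall>x\<in>S. g field_differentiable at x"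
    "Dn S n (deriv f)" "Dn S n (deriv g)" using Suc.prems Dn_Suc by auto
  have "Dn S n (\<lambda>x. deriv f x + deriv g x)" using Suc.IH d by auto
  then have "Dn S n (deriv (\<lambda>x. f x + g x))"
    by (rule Dn_cong[OF assms, rotated]) (use d in auto)
  then show ?case using d by (auto simp: Dn_Suc intro: field_differentiable_add)
qed

lemma Dn_mult:
  assumes "open S" shows "Dn S n f \<Longrightarrow> Dn S n g \<Longrightarrow> Dn S n (\<lambda>x. f x * g x)"
proof (induction n arbitrary: f g)
  case 0 then show ?case unfolding Dn_def by (auto intro: field_differentiable_mult)
next
  case (Suc n)
  have d: "\<forall>x\<in>S. f field_differentiable at x" "\<forall>x\<in>S. g field_differentiable at x"
    "Dn S n (deriv f)" "Dn S n (deriv g)" "Dn S n f" "Dn S n g"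
    using Suc.prems Dn_Suc Dn_mono[of S "Suc n"] by auto
  have "Dn S n (\<lambda>x. f x * deriv g x + deriv f x * g x)"
    using Suc.IH d by (auto intro!: Dn_add[OF assms])
  then have "Dn S n (deriv (\<lambda>x. f x * g x))"
    by (rule Dn_cong[OF assms, rotated]) (use d in auto)
  then show ?case using d by (auto simp: Dn_Suc intro: field_differentiable_mult)
qed

lemma hd_const: "(deriv ^^ i) (\<lambda>x. c) = (\<lambda>x. if i = 0 then c else (0::real))"
  by (induction i) auto

lemma Dn_const: "Dn S n (\<lambda>x. c)"
  unfolding Dn_def hd_const by (auto simp: field_differentiable_const)

lemma deriv_poly: "deriv (poly p) = poly (pderiv p)"
  by (rule ext, rule DERIV_imp_deriv, rule poly_DERIV)

lemma Dn_poly: "Dn S n (poly p)"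
proof (induction n arbitrary: p)
  case 0 then show ?case unfolding Dn_def
    by (auto simp: field_differentiable_def intro: poly_DERIV)
next
  case (Suc n) then show ?case
    by (auto simp: Dn_Suc deriv_poly field_differentiable_def intro: poly_DERIV)
qed

lemma Dn_inverse:
  assumes "open S" "\<And>x. x \<in> S \<Longrightarrow> g x \<noteq> 0" "\<And>m. Dn S m g"
  shows "Dn S n (\<lambda>x. inverse (g x))"
proof (induction n)
  case 0 then show ?case using assms(2) assms(3)[of 0] unfolding Dn_def
    by (auto intro!: field_differentiable_inverse)
next
  case (Suc n)
  have d: "\<forall>x\<in>S. g field_differentiable at x" "Dn S n (deriv g)"
    using assms(3)[of "Suc n"] Dn_Suc by auto
  have "Dn S n (\<lambda>x. (- 1 * deriv g x) * (inverse (g x) * inverse (g x)))"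
    by (intro Dn_mult[OF assms(1)] Dn_const d Suc.IH)
  then have "Dn S n (deriv (\<lambda>x. inverse (g x)))"
    by (rule Dn_cong[OF assms(1), rotated]) (use d assms(2) in \<open>auto simp: power2_eq_square field_simps\<close>)
  then show ?case using d assms(2) by (auto simp: Dn_Suc intro: field_differentiable_inverse)
qed

lemma Dn_exp:
  assumes "open S" "\<And>m. Dn S m u"
  shows "Dn S n (\<lambda>x. exp (u x))"
proof (induction n)
  case 0 then show ?case using assms(2)[of 0] unfolding Dn_def field_differentiable_def
    by (auto intro!: derivative_eq_intros)
next
  case (Suc n)
  have d: "\<forall>x\<in>S. u field_differentiable at x" "Dn S n (deriv u)"
    using assms(2)[of "Suc n"] Dn_Suc by auto
  have dd: "x \<in> S \<Longrightarrow> ((\<lambda>x. exp (u x)) has_field_derivative exp (u x) * deriv u x) (at x)" for x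
    using d(1) by (auto intro!: derivative_eq_intros simp: DERIV_deriv_iff_field_differentiable[symmetric])
  have "Dn S n (\<lambda>x. exp (u x) * deriv u x)"
    by (intro Dn_mult[OF assms(1)] d Suc.IH)
  then have "Dn S n (deriv (\<lambda>x. exp (u x)))"
    by (rule Dn_cong[OF assms(1), rotated]) (use dd in \<open>auto intro: DERIV_imp_deriv[symmetric]\<close>)
  then show ?case using dd by (auto simp: Dn_Suc field_differentiable_def)
qed

lemma Dn_ln:
  assumes "open S" "\<And>x. x \<in> S \<Longrightarrow> u x > 0" "\<And>m. Dn S m u"
  shows "Dn S n (\<lambda>x. ln (u x))"
proof (cases n)
  case 0
  have "x \<in> S \<Longrightarrow> (\<lambda>x. ln (u x)) field_differentiable at x" for x
    using assms(2)[of x] assms(3)[of 0] unfolding Dn_def field_differentiable_def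
    by (auto intro!: derivative_eq_intros)
  then show ?thesis using 0 unfolding Dn_def by auto
next
  case (Suc n)
  have d: "\<forall>x\<in>S. u field_differentiable at x" "Dn S n (deriv u)"
    using assms(3)[of "Suc n"] Dn_Suc by auto
  have dd: "x \<in> S \<Longrightarrow> ((\<lambda>x. ln (u x)) has_field_derivative deriv u x * inverse (u x)) (at x)" for x
    using d(1) assms(2)[of x] by (auto intro!: derivative_eq_intros simp: field_simps DERIV_deriv_iff_field_differentiable[symmetric])
  have "Dn S n (\<lambda>x. deriv u x * inverse (u x))"
    by (intro Dn_mult[OF assms(1)] d Dn_inverse assms) (use assms(2) in force)
  then have "Dn S n (deriv (\<lambda>x. ln (u x)))"
    by (rule Dn_cong[OF assms(1), rotated]) (use dd in \<open>auto intro: DERIV_imp_deriv[symmetric]\<close>)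
  then show ?thesis using dd Suc by (auto simp: Dn_Suc field_differentiable_def)
qed

lemma Suc_choose': "Suc n choose k = (n choose k) + (if k = 0 then 0 else (n choose (k-1)))"
  by (cases k) simp_all

lemma hd_mult_real:
  fixes z :: real
  assumes S: "open S" and f: "\<And>m. Dn S m f" and g: "\<And>m. Dn S m g" and z: "z \<in> S"
  shows "(deriv ^^ n) (\<lambda>w. f w * g w) z =
           (\<Sum>i = 0..n. of_nat (n choose i) * (deriv ^^ i) f z * (deriv ^^ (n-i)) g z)"
using z
proof (induction n arbitrary: z)
  case 0 then show ?case by simp
next
  case (Suc n z)
  have *: "\<And>n z. z \<in> S \<Longrightarrow> ((deriv ^^ n) f has_field_derivative deriv ((deriv ^^ n) f) z) (at z)"
          "\<And>n z. z \<in> S \<Longrightarrow> ((deriv ^^ n) g has_field_derivative deriv ((deriv ^^ n) g) z) (at z)"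
    using f g unfolding DERIV_deriv_iff_field_differentiable by (meson Dn_def order_refl)+
  have sumeq: "(\<Sum>i = 0..n.
               of_nat (n choose i) * (deriv ((deriv ^^ i) f) z * (deriv ^^ (n-i)) g z + deriv ((deriv ^^ (n-i)) g) z * (deriv ^^ i) f z)) =
            g z * deriv ((deriv ^^ n) f) z + (\<Sum>i = 0..n. (deriv ^^ i) f z * (of_nat (Suc n choose i) * (deriv ^^ (Suc n - i)) g z))"
    apply (simp add: Suc_choose' algebra_simps sum.distrib)
    apply (subst (4) sum_Suc_reindex)
    apply (auto simp: algebra_simps Suc_diff_le intro: sum.cong)
    done
  have "((deriv ^^ n) (\<lambda>w. f w * g w) has_field_derivative
         (\<Sum>i = 0..Suc n. (Suc n choose i) * (deriv ^^ i) f z * (deriv ^^ (Suc n - i)) g z))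
        (at z)"
    apply (rule has_field_derivative_transform_within_open
        [of "\<lambda>w. (\<Sum>i = 0..n. of_nat (n choose i) * (deriv ^^ i) f w * (deriv ^^ (n-i)) g w)" _ _ S])
       apply (simp add: algebra_simps)
       apply (rule derivative_eq_intros | simp)+
           apply (auto intro: DERIV_mult * S Suc.prems Suc.IH [symmetric])
    by (metis (no_types, lifting) mult.commute sum.cong sumeq)
  then show ?case
    unfolding funpow.simps o_apply
    by (simp add: DERIV_imp_deriv)
qed

lemma omega_conv:
  assumes h: "h > 0" and sigma0: "coeff \<sigma> 0 \<noteq> 0" and gamma0: "coeff \<rho> 0 / coeff \<sigma> 0 > 0"
  shows "(\<Sum>i=0..n. omega \<rho> \<sigma> h a i * omega \<rho> \<sigma> h b (n - i)) = omega \<rho> \<sigma> h (a + b) n"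
proof -
  define G where "G z = (poly \<rho> z / poly \<sigma> z) / h" for z
  define S where "S = {z. poly \<sigma> z \<noteq> 0} \<inter> G -` {0<..}"
  have oS0: "open {z. poly \<sigma> z \<noteq> 0}"
    by (intro open_Collect_neq continuous_intros)
  have "continuous_on {z. poly \<sigma> z \<noteq> 0} G"
    unfolding G_def using h by (intro continuous_intros) auto
  then have S: "open S" unfolding S_def by (intro continuous_open_preimage oS0) auto
  have "G 0 > 0" unfolding G_def poly_0_coeff_0 using h gamma0 by (rule divide_pos_pos[rotated])
  then have S0: "0 \<in> S" using sigma0 by (simp add: S_def poly_0_coeff_0)
  have SG: "z \<in> S \<Longrightarrow> G z > 0" "z \<in> S \<Longrightarrow> poly \<sigma> z \<noteq> 0" for z by (auto simp: S_def)
  have DG: "Dn S m G" for m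
  proof -
    have "Dn S m (\<lambda>z. poly \<rho> z * inverse (poly \<sigma> z) * inverse h)"
      by (intro Dn_mult[OF S] Dn_poly Dn_inverse[OF S] Dn_const SG)
    then show ?thesis by (rule Dn_cong[OF S, rotated]) (use h in \<open>auto simp: G_def field_simps\<close>)
  qed
  define F where "F c z = G z powr c" for c z
  have DF: "Dn S m (F c)" for m c
  proof -
    have "Dn S m (\<lambda>z. exp (c * ln (G z)))"
      by (intro Dn_exp[OF S] Dn_mult[OF S] Dn_const Dn_ln[OF S] DG SG)
    then show ?thesis by (rule Dn_cong[OF S, rotated]) (use SG in \<open>fastforce simp: F_def powr_def\<close>)
  qed
  have om: "omega \<rho> \<sigma> h c i = (deriv ^^ i) (F (- c)) 0 / fact i" for c i
    unfolding omega_def F_def G_def by simp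
  have "(deriv ^^ n) (F (- (a + b))) 0 = (deriv ^^ n) (\<lambda>z. F (- a) z * F (- b) z) 0"
    by (rule hd_cong[OF S _ S0]) (use SG in \<open>auto simp: F_def powr_add[symmetric]\<close>)
  also have "\<dots> = (\<Sum>i = 0..n. of_nat (n choose i) * (deriv ^^ i) (F (- a)) 0 * (deriv ^^ (n-i)) (F (- b)) 0)"
    by (rule hd_mult_real[OF S DF DF S0])
  finally have eq: "(deriv ^^ n) (F (- (a + b))) 0 = \<dots>" .
  have "(\<Sum>i=0..n. omega \<rho> \<sigma> h a i * omega \<rho> \<sigma> h b (n - i))
     = (\<Sum>i = 0..n. of_nat (n choose i) * (deriv ^^ i) (F (- a)) 0 * (deriv ^^ (n-i)) (F (- b)) 0) / fact n"
    unfolding om sum_divide_distrib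
    by (rule sum.cong) (auto simp: binomial_fact field_simps)
  then show ?thesis using eq om by simp
qed



lemma tri:
  fixes f :: "nat \<Rightarrow> nat \<Rightarrow> 'a::comm_monoid_add"
  shows "(\<Sum>n=0..M. \<Sum>p=0..M-n. f n p) = (\<Sum>q=0..M. \<Sum>n=0..q. f n (q-n))"
proof -
  have "(\<Sum>q=0..M. \<Sum>n=0..q. f n (q-n)) = sum (\<lambda>(i,j). f i j) {(i,j). i+j \<le> M}"
    using sum.triangle_reindex_eq[of "\<lambda>i j. f i j" M] by (simp add: atMost_atLeast0)
  also have "{(i,j). i+j \<le> M} = Sigma {0..M} (\<lambda>n. {0..M-n})" by auto
  also have "sum (\<lambda>(i,j). f i j) \<dots> = (\<Sum>n=0..M. \<Sum>p=0..M-n. f n p)"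
    by (rule sum.Sigma[symmetric]) auto
  finally show ?thesis by simp
qed

lemma tri_full:
  fixes f :: "nat \<Rightarrow> nat \<Rightarrow> 'a::comm_monoid_add"
  shows "(\<Sum>n=0..M. \<Sum>p=0..M-n. f n p) = (\<Sum>n=0..M. \<Sum>p=0..M. if n + p \<le> M then f n p else 0)"
proof (rule sum.cong[OF refl])
  fix n assume "n \<in> {0..M}"
  then have "{0..M-n} = {p\<in>{0..M}. n + p \<le> M}" by auto
  then show "(\<Sum>p=0..M-n. f n p) = (\<Sum>p=0..M. if n + p \<le> M then f n p else 0)"
    using sum.inter_filter[of "{0..M}" "f n" "\<lambda>p. n + p \<le> M"] by simp
qed

lemma tri_swap:
  fixes f :: "nat \<Rightarrow> nat \<Rightarrow> 'a::comm_monoid_add"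
  shows "(\<Sum>n=0..M. \<Sum>p=0..M-n. f n p) = (\<Sum>p=0..M. \<Sum>n=0..M-p. f n p)"
  unfolding tri_full[of f] tri_full[of "\<lambda>p n. f n p"]
  by (subst sum.swap) (simp add: add.commute)

lemma Jminus_adj:
  "(\<Sum>k=0..N. Jminus w a k \<bullet> b k) = (\<Sum>k=0..N. a k \<bullet> Jplus N w b k)"
proof -
  define g where "g n m = (w n *\<^sub>R a m) \<bullet> b (n + m)" for n m
  have "(\<Sum>k=0..N. Jminus w a k \<bullet> b k) = (\<Sum>q=0..N. \<Sum>n=0..q. g n (q-n))"
    unfolding Jminus_def inner_sum_left g_def
    by (intro sum.cong refl) auto
  also have "\<dots> = (\<Sum>n=0..N. \<Sum>p=0..N-n. g n p)" by (rule tri[symmetric])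
  also have "\<dots> = (\<Sum>p=0..N. \<Sum>n=0..N-p. g n p)" by (rule tri_swap)
  also have "\<dots> = (\<Sum>k=0..N. a k \<bullet> Jplus N w b k)"
    unfolding Jplus_def inner_sum_right g_def
    by (intro sum.cong refl) (simp add: algebra_simps)
  finally show ?thesis .
qed

lemma Jplus_comp:
  assumes "k \<le> N"
  shows "Jplus N w1 (Jplus N w2 y) k = Jplus N (\<lambda>q. \<Sum>i=0..q. w1 i * w2 (q-i)) y k"
proof -
  have "Jplus N w1 (Jplus N w2 y) k = (\<Sum>n=0..N-k. \<Sum>p=0..(N-k)-n. (w1 n * w2 p) *\<^sub>R y (k + (n + p)))"
    unfolding Jplus_def scaleR_sum_right
    by (intro sum.cong refl) (auto simp: algebra_simps)
  also have "\<dots> = (\<Sum>q=0..N-k. \<Sum>n=0..q. (w1 n * w2 (q-n)) *\<^sub>R y (k + q))"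
    by (subst tri) (intro sum.cong refl, auto)
  also have "\<dots> = Jplus N (\<lambda>q. \<Sum>i=0..q. w1 i * w2 (q-i)) y k"
    unfolding Jplus_def scaleR_sum_left by simp
  finally show ?thesis .
qed

lemma Jminus_comp:
  "Jminus w1 (Jminus w2 x) k = Jminus (\<lambda>q. \<Sum>i=0..q. w1 i * w2 (q-i)) x k"
proof -
  have "Jminus w1 (Jminus w2 x) k = (\<Sum>n=0..k. \<Sum>p=0..k-n. (w1 n * w2 p) *\<^sub>R x (k - (n + p)))"
    unfolding Jminus_def scaleR_sum_right
    by (intro sum.cong refl) (auto simp: algebra_simps diff_diff_add)
  also have "\<dots> = (\<Sum>q=0..k. \<Sum>n=0..q. (w1 n * w2 (q-n)) *\<^sub>R x (k - q))"
    by (subst tri) (intro sum.cong refl, auto)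
  also have "\<dots> = Jminus (\<lambda>q. \<Sum>i=0..q. w1 i * w2 (q-i)) x k"
    unfolding Jminus_def scaleR_sum_left by simp
  finally show ?thesis .
qed



definition Pt :: "real \<Rightarrow> (nat \<Rightarrow> real) \<Rightarrow> nat \<Rightarrow> (nat \<Rightarrow> real) \<Rightarrow> (nat \<Rightarrow> real^'d) \<Rightarrow> nat \<Rightarrow> (real^'d) \<times> (real^'d)" where
  "Pt h dp s c q i = (\<Sum>nu=0..s. lagr dp s nu (c i) *\<^sub>R q nu,
        (1 / h) *\<^sub>R (\<Sum>nu=0..s. deriv (lagr dp s nu) (c i) *\<^sub>R q nu))"

definition LdD where
  "LdD L' h dp s r b c q \<delta> = h * (\<Sum>i=1..r. b i * blinfun_apply (L' (Pt h dp s c q i)) (Pt h dp s c \<delta> i))"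

lemma Ld_Pt: "Ld L h dp s r b c q = h * (\<Sum>i=1..r. b i * L (Pt h dp s c q i))"
  unfolding Ld_def Pt_def ..

lemma Ld_deriv:
  fixes g :: "'a::real_normed_vector \<Rightarrow> nat \<Rightarrow> real^'d"
  assumes L_deriv: "\<And>p. (L has_derivative blinfun_apply (L' p)) (at p)"
    and g: "\<And>nu. ((\<lambda>z. g z nu) has_derivative g' nu) (at za)"
  shows "((\<lambda>z. Ld L h dp s r b c (g z)) has_derivative (\<lambda>w. LdD L' h dp s r b c (g za) (\<lambda>nu. g' nu w))) (at za)"
proof -
  have P: "((\<lambda>z. Pt h dp s c (g z) i) has_derivative (\<lambda>w. Pt h dp s c (\<lambda>nu. g' nu w) i)) (at za)" for i
    unfolding Pt_def by (intro has_derivative_Pair has_derivative_scaleR_right has_derivative_sum g)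
  have LP: "((\<lambda>z. L (Pt h dp s c (g z) i)) has_derivative (\<lambda>w. blinfun_apply (L' (Pt h dp s c (g za) i)) (Pt h dp s c (\<lambda>nu. g' nu w) i))) (at za)" for i
    by (rule has_derivative_compose[OF P L_deriv])
  show ?thesis unfolding Ld_Pt LdD_def
    by (intro has_derivative_mult_right has_derivative_sum LP)
qed

lemma Ld_deriv_line:
  assumes L_deriv: "\<And>p. (L has_derivative blinfun_apply (L' p)) (at p)"
  shows "((\<lambda>\<epsilon>. Ld L h dp s r b c (\<lambda>nu. q nu + \<epsilon> *\<^sub>R \<delta> nu)) has_derivative (\<lambda>e. e * LdD L' h dp s r b c q \<delta>)) (at 0)"
proof -
  have "((\<lambda>\<epsilon>. Ld L h dp s r b c (\<lambda>nu. q nu + \<epsilon> *\<^sub>R \<delta> nu)) has_derivative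
      (\<lambda>e. LdD L' h dp s r b c ((\<lambda>nu. q nu + 0 *\<^sub>R \<delta> nu)) (\<lambda>nu. e *\<^sub>R \<delta> nu))) (at 0)"
    by (rule Ld_deriv[OF L_deriv]) (auto intro!: derivative_eq_intros)
  moreover have "LdD L' h dp s r b c q (\<lambda>nu. e *\<^sub>R \<delta> nu) = e * LdD L' h dp s r b c q \<delta>" for e
  proof -
    have "Pt h dp s c (\<lambda>nu. e *\<^sub>R \<delta> nu) i = e *\<^sub>R Pt h dp s c \<delta> i" for i
      unfolding Pt_def by (simp add: scaleR_sum_right ac_simps)
    then show ?thesis unfolding LdD_def
      by (simp add: blinfun.scaleR_right sum_distrib_left algebra_simps)
  qed
  ultimately show ?thesis by simp
qed

lemma LdD_decomp:
  "LdD L' h dp s r b c q \<delta> = (\<Sum>nu=0..s. LdD L' h dp s r b c q (\<lambda>j. if j = nu then \<delta> nu else 0))"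
proof -
  have e: "Pt h dp s c (\<lambda>j. if j = nu then \<delta> nu else 0) i =
      (lagr dp s nu (c i) *\<^sub>R \<delta> nu, (1 / h) *\<^sub>R (deriv (lagr dp s nu) (c i) *\<^sub>R \<delta> nu))"
    if "nu \<in> {0..s}" for nu i
  proof -
    have a: "(\<Sum>m=0..s. f m *\<^sub>R (if m = nu then \<delta> nu else 0)) = f nu *\<^sub>R \<delta> nu" for f :: "nat \<Rightarrow> real"
      using that by (simp add: if_distrib cong: if_cong)
    show ?thesis unfolding Pt_def a ..
  qed
  have s: "Pt h dp s c \<delta> i = (\<Sum>nu=0..s. Pt h dp s c (\<lambda>j. if j = nu then \<delta> nu else 0) i)" for i
  proof -
    have "(\<Sum>nu=0..s. Pt h dp s c (\<lambda>j. if j = nu then \<delta> nu else 0) i) =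
      (\<Sum>nu=0..s. (lagr dp s nu (c i) *\<^sub>R \<delta> nu, (1 / h) *\<^sub>R (deriv (lagr dp s nu) (c i) *\<^sub>R \<delta> nu)))"
      by (rule sum.cong[OF refl]) (rule e)
    also have "\<dots> = Pt h dp s c \<delta> i"
      by (simp add: prod_eq_iff fst_sum snd_sum Pt_def scaleR_sum_right)
    finally show ?thesis by simp
  qed
  show ?thesis unfolding LdD_def
    unfolding s blinfun.sum_right sum_distrib_left by (rule sum.swap)
qed

lemma grad_unique:
  fixes F :: "real^'d \<Rightarrow> real"
  assumes "(F has_derivative D) (at x)"
  obtains v where "(F has_derivative (\<lambda>w. v \<bullet> w)) (at x)"
    "\<And>v'. (F has_derivative (\<lambda>w. v' \<bullet> w)) (at x) \<Longrightarrow> v' = v"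
    "\<And>w. D w = v \<bullet> w"
proof -
  have lin: "linear D" using assms has_derivative_linear by blast
  define v where "v = adjoint D 1"
  have Dv: "D w = v \<bullet> w" for w
    using adjoint_works[OF lin, of w 1] by (simp add: v_def inner_commute)
  have 1: "(F has_derivative (\<lambda>w. v \<bullet> w)) (at x)"
    using assms by (simp add: Dv[abs_def])
  have 2: "v' = v" if "(F has_derivative (\<lambda>w. v' \<bullet> w)) (at x)" for v'
  proof -
    have "(\<lambda>w. v' \<bullet> w) = (\<lambda>w. v \<bullet> w)" using has_derivative_unique[OF that 1] .
    then have "v' \<bullet> (v' - v) = v \<bullet> (v' - v)" by metis
    then have "(v' - v) \<bullet> (v' - v) = 0" by (simp add: inner_diff_left)
    then show ?thesis by simp
  qed
  show ?thesis using 1 2 Dv that by blast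
qed

lemma gradarg_eq:
  assumes L_deriv: "\<And>p. (L has_derivative blinfun_apply (L' p)) (at p)"
  shows "gradarg (Ld L h dp s r b c) nu q \<bullet> w = LdD L' h dp s r b c q (\<lambda>j. if j = nu then w else 0)"
proof -
  have g: "((\<lambda>z. (q(nu := z)) j) has_derivative (\<lambda>w. if j = nu then w else 0)) (at (q nu))" for j
    by (cases "j = nu") (auto intro: derivative_eq_intros)
  have D: "((\<lambda>z. Ld L h dp s r b c (q(nu := z))) has_derivative
       (\<lambda>w. LdD L' h dp s r b c q (\<lambda>j. if j = nu then w else 0))) (at (q nu))"
    using Ld_deriv[where g="\<lambda>z. q(nu:=z)" and g'="\<lambda>j w. if j = nu then w else 0" and za="q nu", OF L_deriv g, of h dp s r b c] by simp
  obtain v where v1: "((\<lambda>z. Ld L h dp s r b c (q(nu := z))) has_derivative (\<lambda>w. v \<bullet> w)) (at (q nu))"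
    and v2: "\<And>v'. ((\<lambda>z. Ld L h dp s r b c (q(nu := z))) has_derivative (\<lambda>w. v' \<bullet> w)) (at (q nu)) \<Longrightarrow> v' = v"
    and v3: "\<And>w. LdD L' h dp s r b c q (\<lambda>j. if j = nu then w else 0) = v \<bullet> w"
    using grad_unique[OF D] by blast
  have "gradarg (Ld L h dp s r b c) nu q = v"
    unfolding gradarg_def by (rule the_equality, rule v1, erule v2)
  then show ?thesis using v3 by simp
qed


lemma cons_part:
  fixes Gr :: "nat \<Rightarrow> (nat \<Rightarrow> real^'d) \<Rightarrow> real^'d"
    and DD :: "(nat \<Rightarrow> real^'d) \<Rightarrow> (nat \<Rightarrow> real^'d) \<Rightarrow> real"
    and Z \<delta> :: "nat \<Rightarrow> nat \<Rightarrow> real^'d" and V :: "nat \<Rightarrow> real^'d"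
  assumes N: "N \<ge> 1" and s: "s \<ge> 1"
    and dec: "\<And>q \<delta>. DD q \<delta> = (\<Sum>nu=0..s. DD q (\<lambda>j. if j = nu then \<delta> nu else 0))"
    and hv: "\<And>nu q w. Gr nu q \<bullet> w = DD q (\<lambda>j. if j = nu then w else 0)"
    and tr: "\<forall>k. k + 2 \<le> N \<longrightarrow> \<delta> k s = \<delta> (k + 1) 0" and d0: "\<delta> 0 0 = 0" and dN: "\<delta> (N - 1) s = 0"
    and c1: "\<And>k. k \<in> {1..N - 1} \<Longrightarrow> Gr s (Z (k - 1)) + Gr 0 (Z k) - V k = 0"
    and c2: "\<And>k j. k < N \<Longrightarrow> j \<in> {1..s - 1} \<Longrightarrow> Gr j (Z k) = 0"
  shows "(\<Sum>k=0..<N. DD (Z k) (\<delta> k)) = (\<Sum>k=0..N. V k \<bullet> node N s \<delta> k)"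
proof -
  obtain M where M: "N = Suc M" using N by (cases N) auto
  obtain m where m: "s = Suc m" using s by (cases s) auto
  have e1: "DD (Z k) (\<delta> k) = Gr 0 (Z k) \<bullet> \<delta> k 0 + Gr s (Z k) \<bullet> \<delta> k s" if k: "k < N" for k
  proof -
    have "DD (Z k) (\<delta> k) = (\<Sum>nu=0..s. Gr nu (Z k) \<bullet> \<delta> k nu)"
      by (subst dec) (simp add: hv)
    also have "\<dots> = Gr 0 (Z k) \<bullet> \<delta> k 0 + (\<Sum>nu=Suc 0..m. Gr nu (Z k) \<bullet> \<delta> k nu) + Gr s (Z k) \<bullet> \<delta> k s"
      unfolding m sum.atLeast0_atMost_Suc by (simp add: sum.atLeast_Suc_atMost)
    also have "(\<Sum>nu=Suc 0..m. Gr nu (Z k) \<bullet> \<delta> k nu) = 0"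
      by (rule sum.neutral) (use c2[OF k] m in auto)
    finally show ?thesis by simp
  qed
  have "(\<Sum>k=0..<N. DD (Z k) (\<delta> k)) = (\<Sum>k=0..M. Gr 0 (Z k) \<bullet> \<delta> k 0) + (\<Sum>k=0..M. Gr s (Z k) \<bullet> \<delta> k s)"
    using e1 M by (simp add: sum.distrib atLeastLessThanSuc_atLeastAtMost)
  also have "(\<Sum>k=0..M. Gr 0 (Z k) \<bullet> \<delta> k 0) = (\<Sum>k=1..M. Gr 0 (Z k) \<bullet> node N s \<delta> k)"
    by (simp add: sum.atLeast_Suc_atMost d0 node_def M)
  also have "(\<Sum>k=0..M. Gr s (Z k) \<bullet> \<delta> k s) = (\<Sum>k=Suc 0..Suc M. Gr s (Z (k - 1)) \<bullet> \<delta> (k - 1) s)"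
    by (simp only: sum.shift_bounds_cl_Suc_ivl) simp
  also have "\<dots> = (\<Sum>k=1..M. Gr s (Z (k - 1)) \<bullet> node N s \<delta> k)"
  proof -
    have "(\<Sum>k=Suc 0..Suc M. Gr s (Z (k - 1)) \<bullet> \<delta> (k - 1) s) = (\<Sum>k=1..M. Gr s (Z (k - 1)) \<bullet> \<delta> (k - 1) s)"
      using dN M by (simp add: sum.cl_ivl_Suc)
    also have "\<dots> = (\<Sum>k=1..M. Gr s (Z (k - 1)) \<bullet> node N s \<delta> k)"
    proof (rule sum.cong[OF refl])
      fix k assume k: "k \<in> {1..M}"
      then have k2: "(k - 1) + 2 \<le> N" and k1: "k - 1 + 1 = k" using M by auto
      have "\<delta> (k - 1) s = \<delta> (k - 1 + 1) 0" using tr k2 by blast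
      then have "\<delta> (k - 1) s = \<delta> k 0" by (simp only: k1)
      then show "Gr s (Z (k - 1)) \<bullet> \<delta> (k - 1) s = Gr s (Z (k - 1)) \<bullet> node N s \<delta> k"
        using k M by (simp add: node_def)
    qed
    finally show ?thesis .
  qed
  also have "(\<Sum>k=1..M. Gr 0 (Z k) \<bullet> node N s \<delta> k) + (\<Sum>k=1..M. Gr s (Z (k - 1)) \<bullet> node N s \<delta> k)
     = (\<Sum>k=1..M. V k \<bullet> node N s \<delta> k)"
    unfolding sum.distrib[symmetric]
  proof (rule sum.cong[OF refl])
    fix k assume k: "k \<in> {1..M}"
    then have "V k = Gr s (Z (k - 1)) + Gr 0 (Z k)" using c1[of k] M by (simp add: algebra_simps)
    then show "Gr 0 (Z k) \<bullet> node N s \<delta> k + Gr s (Z (k - 1)) \<bullet> node N s \<delta> k = V k \<bullet> node N s \<delta> k"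
      by (simp add: inner_add_left)
  qed
  also have "\<dots> = (\<Sum>k=0..N. V k \<bullet> node N s \<delta> k)"
    using d0 dN M by (simp add: sum.atLeast_Suc_atMost node_def sum.cl_ivl_Suc)
  finally show ?thesis .
qed

theorem theorem5p2:
  fixes h \<mu> \<alpha> \<beta> :: real and N s r :: nat
    and L :: "(real^'d) \<times> (real^'d) \<Rightarrow> real"
    and L' :: "(real^'d) \<times> (real^'d) \<Rightarrow> ((real^'d) \<times> (real^'d)) \<Rightarrow>\<^sub>L real"
    and dp b c :: "nat \<Rightarrow> real"
    and \<rho> \<sigma> :: "real poly"
    and X Y :: "nat \<Rightarrow> nat \<Rightarrow> real^'d"
  assumes h: "h > 0" and N: "N \<ge> 1" and s: "s \<ge> 1" and mu: "\<mu> > 0"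
    and alpha: "\<alpha> \<in> {0..1/2}" and beta: "\<beta> \<in> {0..1/2}"
    and L_deriv: "\<And>p. (L has_derivative blinfun_apply (L' p)) (at p)"
    and L'_cont: "continuous_on UNIV L'"
    and dp0: "dp 0 = 0" and dps: "dp s = 1" and dp_mono: "\<And>i. i < s \<Longrightarrow> dp i < dp (Suc i)"
    and c01: "\<And>i. i \<in> {1..r} \<Longrightarrow> c i \<in> {0..1}"
    and sigma0: "coeff \<sigma> 0 \<noteq> 0" and gamma0: "coeff \<rho> 0 / coeff \<sigma> 0 > 0"
    and transX: "\<And>k. k + 2 \<le> N \<Longrightarrow> X k s = X (k + 1) 0"
    and transY: "\<And>k. k + 2 \<le> N \<Longrightarrow> Y k s = Y (k + 1) 0"
    and i: "\<And>k. k \<in> {1..N - 1} \<Longrightarrow>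
        gradarg (Ld L h dp s r b c) s (X (k - 1)) + gradarg (Ld L h dp s r b c) 0 (X k)
        - (\<mu> * h) *\<^sub>R Jminus (omega \<rho> \<sigma> h (- (\<alpha> + \<beta>))) (node N s X) k = 0"
    and ii: "\<And>k j. k < N \<Longrightarrow> j \<in> {1..s - 1} \<Longrightarrow> gradarg (Ld L h dp s r b c) j (X k) = 0"
    and iii: "\<And>k. k \<in> {1..N - 1} \<Longrightarrow>
        gradarg (Ld L h dp s r b c) s (Y (k - 1)) + gradarg (Ld L h dp s r b c) 0 (Y k)
        - (\<mu> * h) *\<^sub>R Jplus N (omega \<rho> \<sigma> h (- (\<alpha> + \<beta>))) (node N s Y) k = 0"
    and iv: "\<And>k j. k < N \<Longrightarrow> j \<in> {1..s - 1} \<Longrightarrow> gradarg (Ld L h dp s r b c) j (Y k) = 0"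
  shows "\<forall>\<delta> :: nat \<Rightarrow> nat \<Rightarrow> real^'d.
           (\<forall>k. k + 2 \<le> N \<longrightarrow> \<delta> k s = \<delta> (k + 1) 0) \<and> \<delta> 0 0 = 0 \<and> \<delta> (N - 1) s = 0 \<longrightarrow>
           ((\<lambda>\<epsilon>. action L h dp s r b c \<rho> \<sigma> \<mu> \<alpha> \<beta> N
                    (\<lambda>k nu. X k nu + \<epsilon> *\<^sub>R \<delta> k nu) (\<lambda>k nu. Y k nu + \<epsilon> *\<^sub>R \<delta> k nu))
             has_real_derivative 0) (at 0)"
proof (intro allI impI)
  fix \<delta> :: "nat \<Rightarrow> nat \<Rightarrow> real^'d"
  assume dlt: "(\<forall>k. k + 2 \<le> N \<longrightarrow> \<delta> k s = \<delta> (k + 1) 0) \<and> \<delta> 0 0 = 0 \<and> \<delta> (N - 1) s = 0"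
  define LD where "LD = Ld L h dp s r b c"
  define DD where "DD = LdD L' h dp s r b c"
  define Gr where "Gr = gradarg (Ld L h dp s r b c)"
  define wa where "wa = omega \<rho> \<sigma> h (- \<alpha>)"
  define wb where "wb = omega \<rho> \<sigma> h (- \<beta>)"
  define wab where "wab = omega \<rho> \<sigma> h (- (\<alpha> + \<beta>))"
  define nX where "nX = node N s X"
  define nY where "nY = node N s Y"
  define nd where "nd = node N s \<delta>"
  define A where "A k = Jminus wa nX k" for k
  define A' where "A' k = Jminus wa nd k" for k
  define B where "B k = Jplus N wb nY k" for k
  define B' where "B' k = Jplus N wb nd k" for k
  define T1 where "T1 = (\<Sum>k=0..<N. DD (X k) (\<delta> k) + DD (Y k) (\<delta> k))"
  define T2 where "T2 = (\<Sum>k=0..N. A' k \<bullet> B k + A k \<bullet> B' k)"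
  have node_lin: "node N s (\<lambda>k nu. Z k nu + \<epsilon> *\<^sub>R \<delta> k nu) = (\<lambda>k. node N s Z k + \<epsilon> *\<^sub>R nd k)" for Z \<epsilon>
    by (rule ext) (simp add: node_def nd_def)
  have Jm_lin: "Jminus w (\<lambda>k. a k + \<epsilon> *\<^sub>R a' k) k = Jminus w a k + \<epsilon> *\<^sub>R Jminus w a' k" for w a a' \<epsilon> k
    by (simp add: Jminus_def sum.distrib scaleR_sum_right scaleR_add_right ac_simps)
  have Jp_lin: "Jplus N w (\<lambda>k. a k + \<epsilon> *\<^sub>R a' k) k = Jplus N w a k + \<epsilon> *\<^sub>R Jplus N w a' k" for w a a' \<epsilon> k
    by (simp add: Jplus_def sum.distrib scaleR_sum_right scaleR_add_right ac_simps)
  have act_eq: "(\<lambda>\<epsilon>. action L h dp s r b c \<rho> \<sigma> \<mu> \<alpha> \<beta> N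
                    (\<lambda>k nu. X k nu + \<epsilon> *\<^sub>R \<delta> k nu) (\<lambda>k nu. Y k nu + \<epsilon> *\<^sub>R \<delta> k nu)) =
     (\<lambda>\<epsilon>. (\<Sum>k=0..<N. LD (\<lambda>nu. X k nu + \<epsilon> *\<^sub>R \<delta> k nu) + LD (\<lambda>nu. Y k nu + \<epsilon> *\<^sub>R \<delta> k nu))
        - \<mu> * h * (\<Sum>k=0..N. (A k + \<epsilon> *\<^sub>R A' k) \<bullet> (B k + \<epsilon> *\<^sub>R B' k)))"
    by (simp add: action_def node_lin Jm_lin Jp_lin A_def A'_def B_def B'_def LD_def wa_def wb_def nX_def nY_def)
  have d1: "((\<lambda>\<epsilon>. \<Sum>k=0..<N. LD (\<lambda>nu. X k nu + \<epsilon> *\<^sub>R \<delta> k nu) + LD (\<lambda>nu. Y k nu + \<epsilon> *\<^sub>R \<delta> k nu))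
      has_derivative (\<lambda>e. e * T1)) (at 0)"
    unfolding LD_def T1_def DD_def
    by (rule has_derivative_eq_rhs[OF has_derivative_sum[OF has_derivative_add[OF Ld_deriv_line[OF L_deriv] Ld_deriv_line[OF L_deriv]]]])
       (simp add: sum_distrib_left distrib_left)
  have d2k: "((\<lambda>\<epsilon>. (A k + \<epsilon> *\<^sub>R A' k) \<bullet> (B k + \<epsilon> *\<^sub>R B' k)) has_derivative
      (\<lambda>e. e * (A' k \<bullet> B k + A k \<bullet> B' k))) (at 0)" for k
  proof -
    have lin: "((\<lambda>x. a + x *\<^sub>R v) has_derivative (\<lambda>e. e *\<^sub>R v)) (at 0)" for a v :: "real^'d"
      by (rule has_derivative_eq_rhs[OF has_derivative_add[OF has_derivative_const
            bounded_linear_imp_has_derivative[OF bounded_linear_scaleR_left]]]) simp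
    show ?thesis
      by (rule has_derivative_eq_rhs[OF has_derivative_inner[OF lin lin]])
         (auto simp: algebra_simps inner_add_left inner_add_right)
  qed
  have d2: "((\<lambda>\<epsilon>. \<Sum>k=0..N. (A k + \<epsilon> *\<^sub>R A' k) \<bullet> (B k + \<epsilon> *\<^sub>R B' k)) has_derivative (\<lambda>e. e * T2)) (at 0)"
    unfolding T2_def
    by (rule has_derivative_eq_rhs[OF has_derivative_sum[OF d2k]]) (simp add: sum_distrib_left)
  have dall: "((\<lambda>\<epsilon>. action L h dp s r b c \<rho> \<sigma> \<mu> \<alpha> \<beta> N
                    (\<lambda>k nu. X k nu + \<epsilon> *\<^sub>R \<delta> k nu) (\<lambda>k nu. Y k nu + \<epsilon> *\<^sub>R \<delta> k nu))
      has_derivative (\<lambda>e. e * (T1 - \<mu> * h * T2))) (at 0)"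
    unfolding act_eq
    by (rule has_derivative_eq_rhs[OF has_derivative_diff[OF d1 has_derivative_mult_right[OF d2]]])
       (simp add: algebra_simps)
  have hv: "\<And>nu q w. Gr nu q \<bullet> w = DD q (\<lambda>j. if j = nu then w else 0)"
    unfolding Gr_def DD_def by (rule gradarg_eq[OF L_deriv])
  have dec: "\<And>q \<delta>. DD q \<delta> = (\<Sum>nu=0..s. DD q (\<lambda>j. if j = nu then \<delta> nu else 0))"
    unfolding DD_def by (rule LdD_decomp)
  have TX: "(\<Sum>k=0..<N. DD (X k) (\<delta> k)) = (\<Sum>k=0..N. ((\<mu> * h) *\<^sub>R Jminus wab nX k) \<bullet> nd k)"
    unfolding nd_def
    by (rule cons_part[OF N s dec hv]) (use dlt i ii in \<open>auto simp: Gr_def wab_def nX_def\<close>)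
  have TY: "(\<Sum>k=0..<N. DD (Y k) (\<delta> k)) = (\<Sum>k=0..N. ((\<mu> * h) *\<^sub>R Jplus N wab nY k) \<bullet> nd k)"
    unfolding nd_def
    by (rule cons_part[OF N s dec hv]) (use dlt iii iv in \<open>auto simp: Gr_def wab_def nY_def\<close>)
  have cab: "(\<lambda>q. \<Sum>i=0..q. wa i * wb (q-i)) = wab"
    unfolding wa_def wb_def wab_def by (rule ext) (simp add: omega_conv[OF h sigma0 gamma0])
  have cba: "(\<lambda>q. \<Sum>i=0..q. wb i * wa (q-i)) = wab"
  proof -
    have "- \<beta> + - \<alpha> = - (\<alpha> + \<beta>)" by simp
    then show ?thesis
      unfolding wa_def wb_def wab_def by (intro ext) (simp only: omega_conv[OF h sigma0 gamma0])
  qed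
  have T2a: "(\<Sum>k=0..N. A' k \<bullet> B k) = (\<Sum>k=0..N. nd k \<bullet> Jplus N wab nY k)"
  proof -
    have "(\<Sum>k=0..N. A' k \<bullet> B k) = (\<Sum>k=0..N. nd k \<bullet> Jplus N wa (Jplus N wb nY) k)"
      unfolding A'_def B_def by (rule Jminus_adj)
    also have "\<dots> = (\<Sum>k=0..N. nd k \<bullet> Jplus N wab nY k)"
      by (rule sum.cong[OF refl]) (simp add: Jplus_comp cab)
    finally show ?thesis .
  qed
  have T2b: "(\<Sum>k=0..N. A k \<bullet> B' k) = (\<Sum>k=0..N. Jminus wab nX k \<bullet> nd k)"
  proof -
    have "(\<Sum>k=0..N. A k \<bullet> B' k) = (\<Sum>k=0..N. Jminus wb (Jminus wa nX) k \<bullet> nd k)"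
      unfolding A_def B'_def by (rule Jminus_adj[symmetric])
    also have "\<dots> = (\<Sum>k=0..N. Jminus wab nX k \<bullet> nd k)"
      by (simp add: Jminus_comp cba)
    finally show ?thesis .
  qed
  have "T1 = \<mu> * h * T2"
    unfolding T1_def T2_def sum.distrib TX TY T2a T2b
    by (simp add: sum_distrib_left inner_commute distrib_left)
  then have "(\<lambda>e. e * (T1 - \<mu> * h * T2)) = (*) 0" by auto
  then show "((\<lambda>\<epsilon>. action L h dp s r b c \<rho> \<sigma> \<mu> \<alpha> \<beta> N
                    (\<lambda>k nu. X k nu + \<epsilon> *\<^sub>R \<delta> k nu) (\<lambda>k nu. Y k nu + \<epsilon> *\<^sub>R \<delta> k nu))
             has_real_derivative 0) (at 0)"
    using dall unfolding has_field_derivative_def by simp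
qed

end
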